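(* Let $\ket\psi$ be an $n$-qubit pure state and let $T\subseteq\mathbb F_2^{2n}$ be a subspace. Then \[\frac{1}{|T|}\sum_{a\in T}q_\psi(a) = \sum_{x\in T^\perp}p_\psi(x)^2.\]
   Context: For $x=(a,b)\in\mathbb F_2^{2n}$, $W_x = i^{a\cdot b}X^{a_1}Z^{b_1}\otimes\cdots\otimes X^{a_n}Z^{b_n}$ ($a\cdot b$ over the integers), $p_\psi(x)=2^{-n}\braket{\psi|W_x|\psi}^2$, and $q_\psi(x)=\sum_{y\in\mathbb F_2^{2n}}p_\psi(y)p_\psi(x+y)$. The symplectic product is $[x,y]=\sum_{j=1}^n(x_jy_{n+j}+x_{n+j}y_j)\bmod 2$, and $T^\perp=\{a:[x,a]=0\ \forall x\in T\}$. *)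

theory Defs
  imports Complex_Main
begin

text \<open>Qubits are indexed by a finite type 'n (so n = CARD('n)).
  Computational basis states are bitstrings 'n \<Rightarrow> bool.
  A point x = (a,b) of F_2^{2n} is a pair of bitstrings.\<close>

type_synonym 'n pauli_idx = "('n \<Rightarrow> bool) \<times> ('n \<Rightarrow> bool)"

definition f2_add :: "'n pauli_idx \<Rightarrow> 'n pauli_idx \<Rightarrow> 'n pauli_idx" where
  "f2_add x y = ((\<lambda>j. fst x j \<noteq> fst y j), (\<lambda>j. snd x j \<noteq> snd y j))"

definition f2_zero :: "'n pauli_idx" where
  "f2_zero = ((\<lambda>_. False), (\<lambda>_. False))"

definition is_subspace :: "'n pauli_idx set \<Rightarrow> bool" where
  "is_subspace T \<longleftrightarrow> f2_zero \<in> T \<and> (\<forall>x\<in>T. \<forall>y\<in>T. f2_add x y \<in> T)"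

definition sympl :: "'n::finite pauli_idx \<Rightarrow> 'n pauli_idx \<Rightarrow> nat" where
  "sympl x y = (card {j. fst x j \<and> snd y j} + card {j. snd x j \<and> fst y j}) mod 2"

definition sympl_perp :: "'n::finite pauli_idx set \<Rightarrow> 'n pauli_idx set" where
  "sympl_perp T = {a. \<forall>x\<in>T. sympl x a = 0}"

text \<open>Single-qubit matrices, as functions row \<Rightarrow> column \<Rightarrow> entry (basis |0>,|1> = False,True).\<close>
definition pI :: "bool \<Rightarrow> bool \<Rightarrow> complex" where
  "pI u v = (if u = v then 1 else 0)"
definition pX :: "bool \<Rightarrow> bool \<Rightarrow> complex" where
  "pX u v = (if u \<noteq> v then 1 else 0)"
definition pZ :: "bool \<Rightarrow> bool \<Rightarrow> complex" where
  "pZ u v = (if u = v then (if u then -1 else 1) else 0)"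

definition mmul2 :: "(bool \<Rightarrow> bool \<Rightarrow> complex) \<Rightarrow> (bool \<Rightarrow> bool \<Rightarrow> complex) \<Rightarrow> bool \<Rightarrow> bool \<Rightarrow> complex" where
  "mmul2 A B u v = (\<Sum>w\<in>UNIV. A u w * B w v)"

definition XZ :: "bool \<Rightarrow> bool \<Rightarrow> bool \<Rightarrow> bool \<Rightarrow> complex" where
  "XZ a b = mmul2 (if a then pX else pI) (if b then pZ else pI)"

text \<open>W_x = i^{a.b} X^{a_1}Z^{b_1} \<otimes> ... \<otimes> X^{a_n}Z^{b_n}; matrix entry <u|W_x|v>
  (tensor product entries are products of the factor entries).\<close>
definition weyl :: "'n::finite pauli_idx \<Rightarrow> ('n \<Rightarrow> bool) \<Rightarrow> ('n \<Rightarrow> bool) \<Rightarrow> complex" where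
  "weyl x u v = \<i> ^ card {j. fst x j \<and> snd x j} * (\<Prod>j\<in>UNIV. XZ (fst x j) (snd x j) (u j) (v j))"

definition expval :: "(('n::finite \<Rightarrow> bool) \<Rightarrow> ('n \<Rightarrow> bool) \<Rightarrow> complex) \<Rightarrow> (('n \<Rightarrow> bool) \<Rightarrow> complex) \<Rightarrow> complex" where
  "expval M psi = (\<Sum>u\<in>UNIV. \<Sum>v\<in>UNIV. cnj (psi u) * M u v * psi v)"

definition pure_state :: "(('n::finite \<Rightarrow> bool) \<Rightarrow> complex) \<Rightarrow> bool" where
  "pure_state psi \<longleftrightarrow> (\<Sum>u\<in>UNIV. (cmod (psi u))^2) = 1"

text \<open>p_psi(x) = 2^{-n} <psi|W_x|psi>^2 (a real number, kept in complex).\<close>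
definition p_psi :: "(('n::finite \<Rightarrow> bool) \<Rightarrow> complex) \<Rightarrow> 'n pauli_idx \<Rightarrow> complex" where
  "p_psi psi x = (expval (weyl x) psi)^2 / 2 ^ card (UNIV :: 'n set)"

definition q_psi :: "(('n::finite \<Rightarrow> bool) \<Rightarrow> complex) \<Rightarrow> 'n pauli_idx \<Rightarrow> complex" where
  "q_psi psi x = (\<Sum>y\<in>UNIV. p_psi psi y * p_psi psi (f2_add x y))"

end

theory Submission
  imports Defs "HOL-Library.Cardinality"
begin

definition vadd :: "('n \<Rightarrow> bool) \<Rightarrow> ('n \<Rightarrow> bool) \<Rightarrow> ('n \<Rightarrow> bool)" where
  "vadd u v = (\<lambda>j. u j \<noteq> v j)"

definition chi :: "('n::finite \<Rightarrow> bool) \<Rightarrow> ('n \<Rightarrow> bool) \<Rightarrow> complex" where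
  "chi u v = (-1) ^ card {j. u j \<and> v j}"

lemma vadd_cancel[simp]: "vadd (vadd u v) v = u" "vadd v (vadd v u) = u"
  by (auto simp: vadd_def fun_eq_iff)

lemma vadd_comm: "vadd u v = vadd v u" by (auto simp: vadd_def fun_eq_iff)

lemma chi_prod: "chi u v = (\<Prod>j\<in>UNIV. if u j \<and> v j then -1 else 1)"
  unfolding chi_def by (simp add: prod.If_cases Collect_conj_eq)

lemma chi_sym: "chi u v = chi v u"
  unfolding chi_def by (simp add: conj_commute)

lemma chi_add: "chi (vadd u w) v = chi u v * chi w v"
  unfolding chi_prod prod.distrib[symmetric] by (rule prod.cong) (auto simp: vadd_def)

lemma chi_add2: "chi v (vadd u w) = chi v u * chi v w"
  using chi_add chi_sym by metis

lemma chi_zero[simp]: "chi (\<lambda>_. False) v = 1"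
  unfolding chi_def by simp

lemma sum_shift: "(\<Sum>x\<in>UNIV. g (vadd x c)) = (\<Sum>x\<in>UNIV. g x)"
  by (rule sum.reindex_bij_witness[where i="\<lambda>x. vadd x c" and j="\<lambda>x. vadd x c"]) auto

lemma chi_sum: "(\<Sum>b\<in>UNIV. chi b (d::'n::finite \<Rightarrow> bool)) = (if d = (\<lambda>_. False) then 2 ^ CARD('n) else 0)"
proof (cases "d = (\<lambda>_. False)")
  case True
  have "chi b d = 1" for b using True by (simp add: chi_def)
  then have "(\<Sum>b\<in>UNIV. chi b d) = of_nat CARD('n \<Rightarrow> bool)" by simp
  also have "CARD('n \<Rightarrow> bool) = 2 ^ CARD('n)" by (simp add: card_fun)
  finally show ?thesis using True by simp
next
  case False
  then obtain j where j: "d j" by auto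
  define e where "e = (\<lambda>k. k = j)"
  have "{k. e k \<and> d k} = {j}" using j unfolding e_def by auto
  then have ce: "chi e d = -1" unfolding chi_def by simp
  have "(\<Sum>b\<in>UNIV. chi b d) = (\<Sum>b\<in>UNIV. chi (vadd b e) d)" by (rule sum_shift[symmetric])
  also have "\<dots> = (\<Sum>b\<in>UNIV. - chi b d)" unfolding chi_add ce by simp
  also have "\<dots> = - (\<Sum>b\<in>UNIV. chi b d)" by (rule sum_negf)
  finally have "(\<Sum>b\<in>UNIV. chi b d) = 0" by simp
  then show ?thesis using False by simp
qed

lemma XZ_eq: "XZ a b u v = (if u = (v \<noteq> a) then (if b \<and> v then -1 else 1) else 0)"
  unfolding XZ_def mmul2_def UNIV_bool
  by (cases a; cases b; cases u; cases v) (simp_all add: pX_def pI_def pZ_def)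

lemma weyl_eq: "weyl x u v = \<i> ^ card {j. fst x j \<and> snd x j} *
   (if u = vadd v (fst x) then chi (snd x) v else 0)"
proof (cases "u = vadd v (fst x)")
  case True
  have "XZ (fst x j) (snd x j) (u j) (v j) = (if snd x j \<and> v j then -1 else 1)" for j
    using True by (simp add: XZ_eq vadd_def)
  then show ?thesis using True unfolding weyl_def chi_prod by simp
next
  case False
  then obtain j where "u j \<noteq> (v j \<noteq> fst x j)" by (auto simp: vadd_def fun_eq_iff)
  then have "(\<Prod>j\<in>UNIV. XZ (fst x j) (snd x j) (u j) (v j)) = 0"
    apply (intro prod_zero)
     apply simp
    apply (rule bexI[of _ j])
    by (auto simp: XZ_eq)
  then show ?thesis using False unfolding weyl_def by simp
qed

definition F :: "(('n::finite \<Rightarrow> bool) \<Rightarrow> complex) \<Rightarrow> ('n \<Rightarrow> bool) \<Rightarrow> ('n \<Rightarrow> bool) \<Rightarrow> complex" where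
  "F psi a b = (\<Sum>v\<in>UNIV. cnj (psi (vadd v a)) * psi v * chi b v)"

lemma expval_eq: "expval (weyl x) psi = \<i> ^ card {j. fst x j \<and> snd x j} * F psi (fst x) (snd x)"
proof -
  have "expval (weyl x) psi = (\<Sum>v\<in>UNIV. \<Sum>u\<in>UNIV. cnj (psi u) * weyl x u v * psi v)"
    unfolding expval_def by (rule sum.swap)
  also have "\<dots> = (\<Sum>v\<in>UNIV. \<i> ^ card {j. fst x j \<and> snd x j} * (cnj (psi (vadd v (fst x))) * psi v * chi (snd x) v))"
    unfolding weyl_eq by (rule sum.cong) (auto simp: if_distrib if_distribR cong: if_cong)
  finally show ?thesis unfolding F_def by (simp add: sum_distrib_left)
qed

lemma expval_sq: "(expval (weyl x) psi)^2 = chi (fst x) (snd x) * (F psi (fst x) (snd x))^2"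
proof -
  have "(\<i> ^ k)^2 = (-1::complex)^k" for k
  proof -
    have "(\<i> ^ k)^2 = (\<i>^2)^k" by (metis power_mult mult.commute)
    then show ?thesis by simp
  qed
  then show ?thesis unfolding expval_eq chi_def by (simp add: power_mult_distrib)
qed


lemma sq_expand: "chi a b * (F psi a b)^2 = (\<Sum>v\<in>UNIV. \<Sum>w\<in>UNIV.
   (cnj (psi (vadd v a)) * psi v) * (cnj (psi (vadd w a)) * psi w) * chi b (vadd a (vadd v w)))"
proof -
  have "(F psi a b)^2 = (\<Sum>v\<in>UNIV. \<Sum>w\<in>UNIV.
     (cnj (psi (vadd v a)) * psi v * chi b v) * (cnj (psi (vadd w a)) * psi w * chi b w))"
    unfolding F_def power2_eq_square by (rule sum_product)
  then show ?thesis
    by (simp add: sum_distrib_left chi_add2 chi_sym[of a b] mult_ac)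
qed

lemma inner_b: "(\<Sum>b\<in>UNIV. chi c b * chi b X) = (if vadd c X = (\<lambda>_. False) then 2 ^ CARD('n) else (0::complex))"
  for c :: "'n::finite \<Rightarrow> bool"
proof -
  have "chi c b * chi b X = chi b (vadd c X)" for b by (simp add: chi_add2 chi_sym[of c b])
  then show ?thesis by (simp add: chi_sum)
qed

lemma K_F: "(\<Sum>a\<in>UNIV. \<Sum>b\<in>UNIV. chi c2 a * chi c1 b * (chi a b * (F psi a b)^2))
   = 2 ^ CARD('n) * (chi c1 c2 * (F psi c1 c2)^2)"
  for c1 c2 :: "'n::finite \<Rightarrow> bool"
proof -
  define f where "f a v = cnj (psi (vadd v a)) * psi v" for a v
  define N :: complex where "N = 2 ^ CARD('n)"
  have step1: "(\<Sum>b\<in>UNIV. chi c2 a * chi c1 b * (chi a b * (F psi a b)^2))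
     = (\<Sum>v\<in>UNIV. chi c2 a * f a v * f a (vadd c1 (vadd a v)) * N)" for a
  proof -
    have "(\<Sum>b\<in>UNIV. chi c2 a * chi c1 b * (chi a b * (F psi a b)^2))
      = (\<Sum>b\<in>UNIV. \<Sum>v\<in>UNIV. \<Sum>w\<in>UNIV. chi c2 a * (f a v * f a w) * (chi c1 b * chi b (vadd a (vadd v w))))"
      unfolding sq_expand f_def by (simp add: sum_distrib_left mult_ac)
    also have "\<dots> = (\<Sum>v\<in>UNIV. \<Sum>b\<in>UNIV. \<Sum>w\<in>UNIV. chi c2 a * (f a v * f a w) * (chi c1 b * chi b (vadd a (vadd v w))))"
      by (rule sum.swap)
    also have "\<dots> = (\<Sum>v\<in>UNIV. \<Sum>w\<in>UNIV. \<Sum>b\<in>UNIV. chi c2 a * (f a v * f a w) * (chi c1 b * chi b (vadd a (vadd v w))))"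
      by (rule sum.cong[OF refl], rule sum.swap)
    also have "\<dots> = (\<Sum>v\<in>UNIV. \<Sum>w\<in>UNIV. chi c2 a * (f a v * f a w) * (if w = vadd c1 (vadd a v) then N else 0))"
    proof (intro sum.cong refl)
      fix v w
      have e: "(vadd c1 (vadd a (vadd v w)) = (\<lambda>_. False)) = (w = vadd c1 (vadd a v))"
        by (auto simp: vadd_def fun_eq_iff)
      show "(\<Sum>b\<in>UNIV. chi c2 a * (f a v * f a w) * (chi c1 b * chi b (vadd a (vadd v w))))
        = chi c2 a * (f a v * f a w) * (if w = vadd c1 (vadd a v) then N else 0)"
        by (simp add: sum_distrib_left[symmetric] inner_b e N_def)
    qed
    also have "\<dots> = (\<Sum>v\<in>UNIV. chi c2 a * f a v * f a (vadd c1 (vadd a v)) * N)"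
      by (simp add: if_distrib mult_ac cong: if_cong)
    finally show ?thesis .
  qed
  have "(\<Sum>a\<in>UNIV. \<Sum>b\<in>UNIV. chi c2 a * chi c1 b * (chi a b * (F psi a b)^2))
     = (\<Sum>a\<in>UNIV. \<Sum>v\<in>UNIV. chi c2 a * f a v * f a (vadd c1 (vadd a v)) * N)"
    by (simp add: step1)
  also have "\<dots> = (\<Sum>v\<in>UNIV. \<Sum>a\<in>UNIV. chi c2 a * f a v * f a (vadd c1 (vadd a v)) * N)"
    by (rule sum.swap)
  also have "\<dots> = (\<Sum>v\<in>UNIV. \<Sum>w\<in>UNIV. chi c2 (vadd w v) * f (vadd w v) v * f (vadd w v) (vadd c1 (vadd (vadd w v) v)) * N)"
    by (intro sum.cong refl sum_shift[symmetric])
  also have "\<dots> = (\<Sum>v\<in>UNIV. \<Sum>w\<in>UNIV. chi c2 (vadd v w) * (cnj (psi w) * psi v) * (cnj (psi (vadd v c1)) * psi (vadd w c1)) * N)"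
  proof (intro sum.cong refl)
    fix v w
    have e1: "vadd v (vadd w v) = w" "vadd (vadd c1 w) (vadd w v) = vadd v c1"
      and e2: "vadd c1 w = vadd w c1" "vadd w v = vadd v w"
      by (auto simp: vadd_def fun_eq_iff)
    show "chi c2 (vadd w v) * f (vadd w v) v * f (vadd w v) (vadd c1 (vadd (vadd w v) v)) * N
      = chi c2 (vadd v w) * (cnj (psi w) * psi v) * (cnj (psi (vadd v c1)) * psi (vadd w c1)) * N"
      unfolding f_def by (simp only: vadd_cancel(1), simp only: e1, simp only: e2)
  qed
  also have "\<dots> = N * (\<Sum>v\<in>UNIV. \<Sum>w\<in>UNIV. f c1 v * f c1 (vadd w c1) * chi c2 (vadd c1 (vadd v (vadd w c1))))"
  proof -
    have "chi c2 (vadd v w) * (cnj (psi w) * psi v) * (cnj (psi (vadd v c1)) * psi (vadd w c1)) * N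
      = N * (f c1 v * f c1 (vadd w c1) * chi c2 (vadd c1 (vadd v (vadd w c1))))" (is "?l v w = ?r v w") for v w
    proof -
      have "vadd c1 (vadd v (vadd w c1)) = vadd v w" "vadd (vadd w c1) c1 = w"
        by (auto simp: vadd_def fun_eq_iff)
      then show ?thesis unfolding f_def by (simp add: mult_ac)
    qed
    then show ?thesis by (simp only: sum_distrib_left)
  qed
  also have "\<dots> = N * (\<Sum>v\<in>UNIV. \<Sum>w\<in>UNIV. f c1 v * f c1 w * chi c2 (vadd c1 (vadd v w)))"
  proof -
    have "(\<Sum>w\<in>UNIV. f c1 v * f c1 (vadd w c1) * chi c2 (vadd c1 (vadd v (vadd w c1))))
       = (\<Sum>w\<in>UNIV. f c1 v * f c1 w * chi c2 (vadd c1 (vadd v w)))" for v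
      by (rule sum_shift)
    then show ?thesis by simp
  qed
  also have "\<dots> = N * (chi c1 c2 * (F psi c1 c2)^2)"
    unfolding sq_expand f_def by simp
  finally show ?thesis unfolding N_def .
qed


lemma sympl_chi: "(-1::complex) ^ sympl y x = chi (fst y) (snd x) * chi (snd y) (fst x)"
proof -
  have "(-1::complex) ^ (m mod 2) = (-1) ^ m" for m :: nat
    by (simp add: minus_one_power_iff)
  then show ?thesis unfolding sympl_def chi_def by (simp add: power_add)
qed

lemma sympl_sym: "sympl x y = sympl y x"
  unfolding sympl_def by (simp add: conj_commute add.commute)

lemma f2_add_fst[simp]: "fst (f2_add x y) = vadd (fst x) (fst y)"
  and f2_add_snd[simp]: "snd (f2_add x y) = vadd (snd x) (snd y)"
  by (simp_all add: f2_add_def vadd_def)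

lemma S_add: "(-1::complex) ^ sympl (f2_add a y) x = (-1) ^ sympl a x * (-1) ^ sympl y x"
  unfolding sympl_chi by (simp add: chi_add mult_ac)

lemma sum_pairs: "(\<Sum>y\<in>UNIV. g y) = (\<Sum>a\<in>UNIV. \<Sum>b\<in>UNIV. g (a, b))"
  by (simp add: sum.cartesian_product UNIV_Times_UNIV[symmetric] del: UNIV_Times_UNIV)

lemma K_P: "(\<Sum>y\<in>UNIV. p_psi psi y * (-1) ^ sympl y x) = 2 ^ CARD('n) * p_psi psi x"
  for x :: "'n::finite pauli_idx"
proof -
  obtain c1 c2 where x: "x = (c1, c2)" by (cases x)
  define N :: complex where "N = 2 ^ CARD('n)"
  have N0: "N \<noteq> 0" unfolding N_def by simp
  have "(\<Sum>y\<in>UNIV. p_psi psi y * (-1) ^ sympl y x)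
      = (\<Sum>a\<in>UNIV. \<Sum>b\<in>UNIV. (chi c2 a * chi c1 b * (chi a b * (F psi a b)^2)) / N)"
    unfolding sum_pairs p_psi_def expval_sq sympl_chi x N_def
    by (simp add: chi_sym[of _ c2] chi_sym[of _ c1] mult_ac)
  also have "\<dots> = (\<Sum>a\<in>UNIV. \<Sum>b\<in>UNIV. chi c2 a * chi c1 b * (chi a b * (F psi a b)^2)) / N"
    by (simp add: sum_divide_distrib)
  also have "\<dots> = chi c1 c2 * (F psi c1 c2)^2"
    unfolding K_F N_def[symmetric] using N0 by simp
  also have "\<dots> = 2 ^ CARD('n) * p_psi psi x"
    unfolding p_psi_def expval_sq x by simp
  finally show ?thesis .
qed

lemma subgroup_sum:
  assumes T: "is_subspace T"
  shows "(\<Sum>a\<in>T. (-1::complex) ^ sympl a x) = (if x \<in> sympl_perp T then of_nat (card T) else 0)"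
proof (cases "x \<in> sympl_perp T")
  case True
  then have "(-1::complex) ^ sympl a x = 1" if "a \<in> T" for a
    using that unfolding sympl_perp_def by simp
  then show ?thesis using True by simp
next
  case False
  then obtain a0 where a0: "a0 \<in> T" "sympl a0 x \<noteq> 0" unfolding sympl_perp_def by auto
  then have s1: "sympl a0 x = 1" unfolding sympl_def by simp
  have cl: "f2_add a a0 \<in> T" if "a \<in> T" for a using T that a0(1) unfolding is_subspace_def by blast
  have inv: "f2_add (f2_add a a0) a0 = a" for a :: "'a pauli_idx"
    by (auto simp: f2_add_def prod_eq_iff fun_eq_iff)
  have "(\<Sum>a\<in>T. (-1::complex) ^ sympl a x) = (\<Sum>a\<in>T. (-1::complex) ^ sympl (f2_add a a0) x)"
    by (rule sum.reindex_bij_witness[where i="\<lambda>a. f2_add a a0" and j="\<lambda>a. f2_add a a0"])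
       (auto simp: inv cl)
  also have "\<dots> = - (\<Sum>a\<in>T. (-1::complex) ^ sympl a x)"
    by (simp add: S_add s1 sum_negf)
  finally have "(\<Sum>a\<in>T. (-1::complex) ^ sympl a x) = 0" by simp
  then show ?thesis using False by simp
qed


theorem theorem3p2:
  fixes psi :: "('n::finite \<Rightarrow> bool) \<Rightarrow> complex"
    and T :: "'n pauli_idx set"
  assumes "pure_state psi"
    and "is_subspace T"
  shows "(\<Sum>a\<in>T. q_psi psi a) / of_nat (card T) = (\<Sum>x\<in>sympl_perp T. (p_psi psi x)^2)"
proof -
  define N :: complex where "N = 2 ^ CARD('n)"
  have N0: "N \<noteq> 0" unfolding N_def by simp
  define P where "P = p_psi psi"
  define S :: "'n pauli_idx \<Rightarrow> 'n pauli_idx \<Rightarrow> complex" where "S a x = (-1) ^ sympl a x" for a x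
  have PK: "P z = (\<Sum>x\<in>UNIV. P x * S z x) / N" for z
    using K_P[of psi z] N0 unfolding P_def S_def N_def by (simp add: sympl_sym[of _ z])
  have SK: "(\<Sum>y\<in>UNIV. P y * S y x) = N * P x" for x
    using K_P[of psi x] unfolding P_def S_def N_def by simp
  have Sadd: "S (f2_add a y) x = S a x * S y x" for a y x unfolding S_def by (rule S_add)
  have ST: "(\<Sum>a\<in>T. S a x) = (if x \<in> sympl_perp T then of_nat (card T) else 0)" for x
    unfolding S_def by (rule subgroup_sum[OF assms(2)])
  have "(\<Sum>a\<in>T. q_psi psi a) = (\<Sum>a\<in>T. \<Sum>y\<in>UNIV. \<Sum>x\<in>UNIV. P y * P x * S a x * S y x / N)"
  proof (rule sum.cong[OF refl])
    fix a
    have "q_psi psi a = (\<Sum>y\<in>UNIV. P y * ((\<Sum>x\<in>UNIV. P x * (S a x * S y x)) / N))"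
      unfolding q_psi_def P_def[symmetric] by (subst PK) (simp add: Sadd)
    then show "q_psi psi a = (\<Sum>y\<in>UNIV. \<Sum>x\<in>UNIV. P y * P x * S a x * S y x / N)"
      by (simp add: sum_distrib_left sum_divide_distrib mult_ac)
  qed
  also have "\<dots> = (\<Sum>a\<in>T. \<Sum>x\<in>UNIV. \<Sum>y\<in>UNIV. P y * P x * S a x * S y x / N)"
    by (rule sum.cong[OF refl], rule sum.swap)
  also have "\<dots> = (\<Sum>x\<in>UNIV. \<Sum>a\<in>T. \<Sum>y\<in>UNIV. P y * P x * S a x * S y x / N)"
    by (rule sum.swap)
  also have "\<dots> = (\<Sum>x\<in>UNIV. P x / N * (\<Sum>a\<in>T. S a x) * (\<Sum>y\<in>UNIV. P y * S y x))"
    by (simp add: sum_distrib_left sum_distrib_right mult_ac)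
  also have "\<dots> = (\<Sum>x\<in>UNIV. if x \<in> sympl_perp T then of_nat (card T) * (P x)^2 else 0)"
    unfolding ST SK using N0 by (intro sum.cong refl) (simp add: power2_eq_square)
  also have "\<dots> = of_nat (card T) * (\<Sum>x\<in>sympl_perp T. (P x)^2)"
    by (simp add: sum.If_cases sum_distrib_left)
  finally have eq: "(\<Sum>a\<in>T. q_psi psi a) = of_nat (card T) * (\<Sum>x\<in>sympl_perp T. (P x)^2)" .
  have "f2_zero \<in> T" using assms(2) unfolding is_subspace_def by blast
  then have "card T \<noteq> 0" by (auto simp: card_eq_0_iff)
  then show ?thesis unfolding eq P_def by simp
qed

end
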